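(* Fix positive constants $\varphi_{\max}, k_s, \rho_{\max}, k_v, \mu_{\max}, q_{\min}, \gamma, \beta$ and a substrate feed $s_{\text{in}}>0$. Fix $\alpha\in(0,1)$ and let $\mathcal{D}_\alpha=(0,\psi_\alpha(s_{\text{in}}))$. Then the function $$d\mapsto P_{\text{yield}}(\alpha,d)=\frac{\alpha\beta\gamma\left(s_{\text{in}}-\psi_\alpha^{-1}(d)\right)}{s_{\text{in}}\,\mu^{-1}(d)}$$ is strictly decreasing on $\mathcal{D}_\alpha$.
   Context: Let $\varphi(s)=\frac{\varphi_{\max}s}{k_s+s}$, $\rho(v)=\frac{\rho_{\max}v}{k_v+v}$ for $s,v\ge 0$, and $\mu(q)=\mu_{\max}\left(1-\frac{q_{\min}}{q}\right)$ for $q\ge q_{\min}$. Their inverses are $\varphi^{-1}(y)=\frac{k_s y}{\varphi_{\max}-y}$ for $0\le y<\varphi_{\max}$, $\rho^{-1}(y)=\frac{k_v y}{\rho_{\max}-y}$ for $0\le y<\rho_{\max}$, and $\mu^{-1}(y)=\frac{q_{\min}\mu_{\max}}{\mu_{\max}-y}$ for $0\le y<\mu_{\max}$. For $\alpha\in(0,1)$, the function $\psi_\alpha^{-1}$ is defined by $$\psi_\alpha^{-1}(y)=\varphi^{-1}\!\left(\frac{y}{1-\alpha}\right)+\frac{\rho^{-1}\!\left(y\,\mu^{-1}(y)\right)}{\alpha\beta\gamma}$$ on the set of $y\ge 0$ where all terms are defined (i.e. $y<(1-\alpha)\varphi_{\max}$, $y<\mu_{\max}$, $y\mu^{-1}(y)<\rho_{\max}$);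 it is strictly increasing from $0$ to $+\infty$, and $\psi_\alpha$ denotes its inverse function, an increasing function on $[0,\infty)$. In the underlying bioreactor model, $P_{\text{yield}}=c^*/s_{\text{in}}$ is the bioreactor yield at the coexistence steady state with algal biomass $c^*=\alpha\beta\gamma(s_{\text{in}}-\psi_\alpha^{-1}(d))/\mu^{-1}(d)$, which exists exactly when $0<d<\psi_\alpha(s_{\text{in}})$. *)

theory Defs
  imports Complex_Main
begin

definition phi_inv :: "real \<Rightarrow> real \<Rightarrow> real \<Rightarrow> real" where
  "phi_inv phimax ks y = ks * y / (phimax - y)"

definition rho_inv :: "real \<Rightarrow> real \<Rightarrow> real \<Rightarrow> real" where
  "rho_inv rhomax kv y = kv * y / (rhomax - y)"

definition mu_inv :: "real \<Rightarrow> real \<Rightarrow> real \<Rightarrow> real" where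
  "mu_inv mumax qmin y = qmin * mumax / (mumax - y)"

definition psi_dom :: "real \<Rightarrow> real \<Rightarrow> real \<Rightarrow> real \<Rightarrow> real \<Rightarrow> real set" where
  "psi_dom phimax rhomax mumax qmin alpha =
     {y. 0 \<le> y \<and> y < (1 - alpha) * phimax \<and> y < mumax \<and> y * mu_inv mumax qmin y < rhomax}"

definition psi_inv ::
  "real \<Rightarrow> real \<Rightarrow> real \<Rightarrow> real \<Rightarrow> real \<Rightarrow> real \<Rightarrow> real \<Rightarrow> real \<Rightarrow> real \<Rightarrow> real \<Rightarrow> real" where
  "psi_inv phimax ks rhomax kv mumax qmin gamma beta alpha y =
     phi_inv phimax ks (y / (1 - alpha))
     + rho_inv rhomax kv (y * mu_inv mumax qmin y) / (alpha * beta * gamma)"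

definition psi ::
  "real \<Rightarrow> real \<Rightarrow> real \<Rightarrow> real \<Rightarrow> real \<Rightarrow> real \<Rightarrow> real \<Rightarrow> real \<Rightarrow> real \<Rightarrow> real \<Rightarrow> real" where
  "psi phimax ks rhomax kv mumax qmin gamma beta alpha s =
     (THE y. y \<in> psi_dom phimax rhomax mumax qmin alpha \<and>
             psi_inv phimax ks rhomax kv mumax qmin gamma beta alpha y = s)"

definition P_yield ::
  "real \<Rightarrow> real \<Rightarrow> real \<Rightarrow> real \<Rightarrow> real \<Rightarrow> real \<Rightarrow> real \<Rightarrow> real \<Rightarrow> real \<Rightarrow> real \<Rightarrow> real \<Rightarrow> real" where
  "P_yield phimax ks rhomax kv mumax qmin gamma beta s_in alpha d =
     alpha * beta * gamma * (s_in - psi_inv phimax ks rhomax kv mumax qmin gamma beta alpha d)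
       / (s_in * mu_inv mumax qmin d)"

end

theory Submission imports Defs begin

lemma frac_mono:
  fixes k P z1 z2 :: real
  assumes "k > 0" "0 \<le> z1" "z1 < z2" "z2 < P"
  shows "k * z1 / (P - z1) < k * z2 / (P - z2)"
proof -
  have "k * z1 * (P - z2) < k * z2 * (P - z1)"
    using assms by (simp add: algebra_simps mult_strict_left_mono)
  then show ?thesis using assms by (simp add: divide_simps)
qed

lemma w_mono:
  fixes m q y1 y2 :: real
  assumes "m > 0" "q > 0" "0 \<le> y1" "y1 < y2" "y2 < m"
  shows "y1 * mu_inv m q y1 < y2 * mu_inv m q y2"
proof -
  have "y1 * mu_inv m q y1 = (q*m) * y1 / (m - y1)" by (simp add: mu_inv_def)
  moreover have "y2 * mu_inv m q y2 = (q*m) * y2 / (m - y2)" by (simp add: mu_inv_def)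
  ultimately show ?thesis using frac_mono[of "q*m" y1 y2 m] assms by simp
qed

lemma dom_iff:
  fixes P R m q a y :: real
  assumes "P > 0" "R > 0" "m > 0" "q > 0"
  shows "y \<in> psi_dom P R m q a \<longleftrightarrow> 0 \<le> y \<and> y < (1-a)*P \<and> y < R*m/(q*m+R)"
proof -
  have B: "R*m/(q*m+R) < m" using assms by (simp add: divide_simps)
  have "y < m \<Longrightarrow> (y * mu_inv m q y < R \<longleftrightarrow> y < R*m/(q*m+R))"
  proof -
    assume "y < m"
    then have "y * mu_inv m q y < R \<longleftrightarrow> y*(q*m) < R*(m-y)"
      using assms by (simp add: mu_inv_def divide_simps mult.commute mult.left_commute)
    also have "\<dots> \<longleftrightarrow> y*(q*m+R) < R*m" by (simp add: algebra_simps)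
    also have "\<dots> \<longleftrightarrow> y < R*m/(q*m+R)" using assms
      by (simp add: pos_less_divide_eq add_pos_pos)
    finally show ?thesis .
  qed
  then show ?thesis using B unfolding psi_dom_def by auto
qed


lemma psi_inv_mono:
  fixes P ks R kv m q g b a y1 y2 :: real
  assumes pos: "P > 0" "ks > 0" "R > 0" "kv > 0" "m > 0" "q > 0" "g > 0" "b > 0" "0 < a" "a < 1"
    and y2: "y2 \<in> psi_dom P R m q a" and y1: "0 \<le> y1" "y1 < y2"
  shows "psi_inv P ks R kv m q g b a y1 < psi_inv P ks R kv m q g b a y2"
proof -
  have d2: "y2 < (1-a)*P" "y2 < m" "y2 * mu_inv m q y2 < R" using y2 unfolding psi_dom_def by auto
  have "y1/(1-a) < y2/(1-a)" using y1 pos by (simp add: divide_strict_right_mono)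
  moreover have "y2/(1-a) < P" using d2 pos by (simp add: pos_divide_less_eq mult.commute)
  ultimately have A: "phi_inv P ks (y1/(1-a)) < phi_inv P ks (y2/(1-a))"
    unfolding phi_inv_def using frac_mono[of ks "y1/(1-a)" "y2/(1-a)" P] pos y1 by simp
  have w: "y1 * mu_inv m q y1 < y2 * mu_inv m q y2" using w_mono[of m q y1 y2] pos y1 d2 by simp
  have w0: "0 \<le> y1 * mu_inv m q y1" using pos y1 d2 by (simp add: mu_inv_def)
  have "rho_inv R kv (y1 * mu_inv m q y1) < rho_inv R kv (y2 * mu_inv m q y2)"
    unfolding rho_inv_def using frac_mono[OF pos(4) w0 w d2(3)] .
  then have B: "rho_inv R kv (y1 * mu_inv m q y1)/(a*b*g) < rho_inv R kv (y2 * mu_inv m q y2)/(a*b*g)"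
    using pos by (simp add: divide_strict_right_mono)
  show ?thesis unfolding psi_inv_def using A B by simp
qed

lemma psi_inv_0: "psi_inv P ks R kv m q g b a 0 = 0"
  by (simp add: psi_inv_def phi_inv_def rho_inv_def)

lemma psi_inv_cont:
  fixes P ks R kv m q g b a t :: real
  assumes pos: "P > 0" "ks > 0" "R > 0" "kv > 0" "m > 0" "q > 0" "g > 0" "b > 0" "0 < a" "a < 1"
    and t: "t \<in> psi_dom P R m q a"
  shows "continuous_on {0..t} (psi_inv P ks R kv m q g b a)"
proof -
  have D: "\<And>y. y \<in> {0..t} \<Longrightarrow> y \<in> psi_dom P R m q a"
    using t pos by (auto simp: dom_iff)
  have "\<And>y. y \<in> {0..t} \<Longrightarrow> y/(1-a) < P \<and> y < m \<and> y * mu_inv m q y < R"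
  proof -
    fix y assume "y \<in> {0..t}"
    then have "y \<in> psi_dom P R m q a" by (rule D)
    then show "y/(1-a) < P \<and> y < m \<and> y * mu_inv m q y < R"
      using pos unfolding psi_dom_def by (auto simp: pos_divide_less_eq mult.commute)
  qed
  note H = this
  have M: "continuous_on {0..t} (mu_inv m q)" unfolding mu_inv_def
      using H pos by (intro continuous_intros ballI) (metis less_irrefl right_minus_eq)
  show ?thesis unfolding psi_inv_def phi_inv_def rho_inv_def
  proof (intro continuous_intros ballI)
    fix y assume yy: "y \<in> {0..t}"
    from H[OF yy] pos show "P - y / (1 - a) \<noteq> 0" by simp
    from H[OF yy] pos show "R - y * mu_inv m q y \<noteq> 0" by simp
    from H[OF yy] pos show "a * b * g \<noteq> 0" by simp
  qed (use pos M in auto)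
qed


lemma frac_gt:
  fixes k P z s :: real
  assumes "k > 0" "z < P" "s \<ge> 0" "P*s/(k+s) < z"
  shows "s < k * z / (P - z)"
proof -
  have "P*s < z*(k+s)" using assms by (simp add: pos_divide_less_eq add_pos_nonneg)
  then have "s*(P-z) < k*z" by (simp add: algebra_simps)
  then show ?thesis using assms by (simp add: pos_less_divide_eq)
qed

lemma w_iff:
  fixes m q Rw y :: real
  assumes "m > 0" "q > 0" "Rw > 0" "y < m"
  shows "y * mu_inv m q y < Rw \<longleftrightarrow> y < Rw*m/(q*m+Rw)"
proof -
  have "y * mu_inv m q y < Rw \<longleftrightarrow> y*(q*m) < Rw*(m-y)"
    using assms by (simp add: mu_inv_def divide_simps mult.commute mult.left_commute)
  also have "\<dots> \<longleftrightarrow> y*(q*m+Rw) < Rw*m" by (simp add: algebra_simps)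
  also have "\<dots> \<longleftrightarrow> y < Rw*m/(q*m+Rw)" using assms
    by (simp add: pos_less_divide_eq add_pos_pos)
  finally show ?thesis .
qed

lemma psi_inv_big:
  fixes P ks R kv m q g b a s :: real
  assumes pos: "P > 0" "ks > 0" "R > 0" "kv > 0" "m > 0" "q > 0" "g > 0" "b > 0" "0 < a" "a < 1"
    and s: "s > 0"
  shows "\<exists>y\<in>psi_dom P R m q a. s < psi_inv P ks R kv m q g b a y"
proof -
  define B1 where "B1 = (1-a)*P"
  define B2 where "B2 = R*m/(q*m+R)"
  define c1 where "c1 = (1-a)*(P*s/(ks+s))"
  define S where "S = s*(a*b*g)"
  define Rw where "Rw = R*S/(kv+S)"
  define c2 where "c2 = Rw*m/(q*m+Rw)"
  have abg: "a*b*g > 0" using pos by simp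
  have S0: "S > 0" using s abg unfolding S_def by simp
  have Rw0: "Rw > 0" "Rw < R" using S0 pos unfolding Rw_def by (simp_all add: divide_simps)
  have B2m: "B2 < m" using pos unfolding B2_def by (simp add: divide_simps)
  have c1B1: "c1 < B1" "0 \<le> c1" using pos s unfolding c1_def B1_def by (simp_all add: divide_simps)
  have qm: "q*m > 0" using pos by simp
  have "(m*q*m)*Rw < (m*q*m)*R" using Rw0 pos by simp
  then have "Rw*m*(q*m+R) < R*m*(q*m+Rw)" by (simp add: algebra_simps)
  then have c2B2: "c2 < B2" "0 \<le> c2" using pos Rw0 qm unfolding c2_def B2_def
    by (simp_all add: divide_simps add_pos_pos)
  define y where "y = (min c1 c2 + min B1 B2)/2"
  have ymin: "min c1 c2 < y" "y < min B1 B2" using c1B1 c2B2 unfolding y_def by auto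
  have ydom: "y \<in> psi_dom P R m q a" using ymin c1B1 c2B2
    by (simp add: dom_iff[OF pos(1,3,5,6)] B1_def B2_def)
  have ym: "y < m" using ymin B2m by simp
  have y0: "0 \<le> y" using ymin c1B1 c2B2 by simp
  have yP: "y/(1-a) < P" using ymin pos unfolding B1_def by (simp add: pos_divide_less_eq mult.commute)
  have wR: "y * mu_inv m q y < R" using ydom unfolding psi_dom_def by simp
  have w0: "0 \<le> y * mu_inv m q y" using y0 ym pos by (simp add: mu_inv_def)
  have phi0: "0 \<le> phi_inv P ks (y/(1-a))" using y0 yP pos unfolding phi_inv_def by simp
  have rho0: "0 \<le> rho_inv R kv (y * mu_inv m q y)/(a*b*g)"
    using w0 wR pos abg unfolding rho_inv_def by simp
  show ?thesis
  proof (intro bexI[OF _ ydom])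
    show "s < psi_inv P ks R kv m q g b a y"
    proof (cases "c1 < y")
      case True
      then have "P*s/(ks+s) < y/(1-a)" using pos unfolding c1_def
        by (simp add: pos_less_divide_eq mult.commute)
      then have "s < phi_inv P ks (y/(1-a))" unfolding phi_inv_def
        using frac_gt[of ks "y/(1-a)" P s] pos yP s by simp
      then show ?thesis unfolding psi_inv_def using rho0 by simp
    next
      case False
      then have "c2 < y" using ymin by simp
      have c2m: "c2 < m" using c2B2 B2m by simp
      have "\<not> c2 * mu_inv m q c2 < Rw" using w_iff[OF pos(5,6) Rw0(1) c2m] unfolding c2_def by simp
      moreover have "c2 * mu_inv m q c2 < y * mu_inv m q y"
        using w_mono[OF pos(5,6) c2B2(2) \<open>c2 < y\<close> ym] .
      ultimately have "R*S/(kv+S) < y * mu_inv m q y" unfolding Rw_def by simp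
      then have "S < rho_inv R kv (y * mu_inv m q y)" unfolding rho_inv_def
        using frac_gt[of kv "y * mu_inv m q y" R S] pos wR S0 by simp
      then have "s < rho_inv R kv (y * mu_inv m q y)/(a*b*g)" using abg unfolding S_def
        by (simp add: pos_less_divide_eq)
      then show ?thesis unfolding psi_inv_def using phi0 by simp
    qed
  qed
qed


theorem mainTheorem1:
  fixes phimax ks rhomax kv mumax qmin gamma beta s_in alpha :: real
  assumes "phimax > 0" "ks > 0" "rhomax > 0" "kv > 0" "mumax > 0" "qmin > 0"
    "gamma > 0" "beta > 0" "s_in > 0" "0 < alpha" "alpha < 1"
  shows "strict_antimono_on {0<..<psi phimax ks rhomax kv mumax qmin gamma beta alpha s_in}
           (P_yield phimax ks rhomax kv mumax qmin gamma beta s_in alpha)"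
proof -
  note pos = assms(1-8,10,11)
  let ?D = "psi_dom phimax rhomax mumax qmin alpha"
  let ?f = "psi_inv phimax ks rhomax kv mumax qmin gamma beta alpha"
  obtain t where t: "t \<in> ?D" "s_in < ?f t" using psi_inv_big[OF pos assms(9)] by blast
  have t0: "0 \<le> t" using t unfolding psi_dom_def by simp
  have "\<exists>x\<ge>0. x \<le> t \<and> ?f x = s_in"
    using IVT'[of ?f 0 s_in t] psi_inv_0 t t0 assms(9) psi_inv_cont[OF pos t(1)] by simp
  then obtain y0 where y0: "0 \<le> y0" "y0 \<le> t" "?f y0 = s_in" by blast
  have y0D: "y0 \<in> ?D" using t y0 pos by (auto simp: dom_iff)
  have psi_eq: "psi phimax ks rhomax kv mumax qmin gamma beta alpha s_in = y0"
    unfolding psi_def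
  proof (rule the_equality)
    show "y0 \<in> ?D \<and> ?f y0 = s_in" using y0D y0 by simp
  next
    fix y assume y: "y \<in> ?D \<and> ?f y = s_in"
    have yy0: "0 \<le> y" using y unfolding psi_dom_def by simp
    show "y = y0"
    proof (rule ccontr)
      assume "y \<noteq> y0"
      then consider "y < y0" | "y0 < y" by linarith
      then show False
      proof cases
        case 1 then show False using psi_inv_mono[OF pos y0D yy0] y y0 by simp
      next
        case 2 then show False using psi_inv_mono[OF pos _ y0(1)] y y0 by force
      qed
    qed
  qed
  show ?thesis unfolding psi_eq
  proof (rule monotone_onI)
    fix d1 d2 assume d1: "d1 \<in> {0<..<y0}" and d2: "d2 \<in> {0<..<y0}" and d12: "d1 < d2"
    have d2D: "d2 \<in> ?D" using d2 y0D pos by (auto simp: dom_iff)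
    have d2m: "d2 < mumax" using d2D unfolding psi_dom_def by simp
    have f12: "?f d1 < ?f d2" using psi_inv_mono[OF pos d2D _ d12] d1 by simp
    have f2: "?f d2 < s_in" using psi_inv_mono[OF pos y0D _ ] d2 y0 by simp
    have M1: "0 < mu_inv mumax qmin d1" using d12 d2m pos by (simp add: mu_inv_def)
    have M12: "mu_inv mumax qmin d1 < mu_inv mumax qmin d2" using d12 d2m pos
      by (simp add: mu_inv_def divide_simps)
    have abg: "alpha*beta*gamma > 0" using pos by simp
    have N2: "0 < alpha*beta*gamma*(s_in - ?f d2)" using abg f2 by simp
    have N12: "alpha*beta*gamma*(s_in - ?f d2) \<le> alpha*beta*gamma*(s_in - ?f d1)"
      using abg f12 by (simp add: mult_left_mono)
    have W: "0 < s_in * mu_inv mumax qmin d1" using M1 assms(9) by simp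
    have Z: "s_in * mu_inv mumax qmin d1 < s_in * mu_inv mumax qmin d2" using M12 assms(9) by simp
    show "P_yield phimax ks rhomax kv mumax qmin gamma beta s_in alpha d2
        < P_yield phimax ks rhomax kv mumax qmin gamma beta s_in alpha d1"
      unfolding P_yield_def using frac_less2[OF N2 N12 W Z] .
  qed
qed

end
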